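(* Let $(X,d)$ be a compact metric space, $(\Omega,\mathcal{B},\mathbf{P})$ a probability space, and $\xi=\xi(x)$, $x\in X$, a separable real-valued random field which is continuous with respect to $d$ with probability one. Let $\Phi$ be an Orlicz function (not necessarily satisfying the $\Delta_2$ condition) such that $$\Big\|\sup_{x\in X}|\xi(x)|\Big\|_{\Phi}<\infty ,$$ and let $\Psi$ be another Orlicz function which is weaker than $\Phi$, i.e. $\lim_{u\to\infty}\Psi(uv)/\Phi(u)=0$ for every constant $v>0$. Then there exist a random variable $\zeta\ge0$ with $\|\zeta\|_{\Psi}=1$ and a non-random function $h:[0,\operatorname{diam}(d,X)]\to[0,\infty)$, continuous, strictly increasing, with $h(0)=h(0+)=0$ (depending on $\Psi,\Phi$), such that with probability one $$\Delta(\xi,\delta)\le\zeta\cdot h(\delta)\quad\text{for all }\delta\in[0,\operatorname{diam}(d,X)].$$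
   Context: For a function $f:X\to\mathbb{R}$ the modulus of continuity is $\Delta(f,\delta)=\sup_{d(x,y)\le\delta}|f(x)-f(y)|$, $\delta\ge0$, and $\operatorname{diam}(d,X)=\sup_{x,y\in X}d(x,y)$. An Orlicz function is a function $\Phi:\mathbb{R}\to[0,\infty)$ that is convex, even, continuous, twice continuously differentiable on $u\ge2$, strictly increasing on $[0,\infty)$, with $\Phi(0)=0$ and $\lim_{|u|\to\infty}\Phi(u)=\infty$. The Orlicz space $L(\Phi)$ over $(\Omega,\mathcal{B},\mathbf{P})$ carries the Luxemburg norm $\|\zeta\|_{\Phi}=\inf\{k>0:\ \mathbf{E}\,\Phi(\zeta/k)\le1\}$. *)

theory Defs
  imports "HOL-Analysis.Analysis" "HOL-Probability.Probability"
begin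

definition orlicz_function :: "(real \<Rightarrow> real) \<Rightarrow> bool" where
  "orlicz_function \<Phi> \<longleftrightarrow>
     (\<forall>u. \<Phi> u \<ge> 0) \<and>
     convex_on UNIV \<Phi> \<and>
     (\<forall>u. \<Phi> (- u) = \<Phi> u) \<and>
     continuous_on UNIV \<Phi> \<and>
     (\<exists>\<Phi>' \<Phi>''. (\<forall>u\<in>{2..}. (\<Phi> has_real_derivative \<Phi>' u) (at u within {2..}) \<and>
                            (\<Phi>' has_real_derivative \<Phi>'' u) (at u within {2..})) \<and>
                 continuous_on {2..} \<Phi>'') \<and>
     strict_mono_on {0..} \<Phi> \<and>
     \<Phi> 0 = 0 \<and>
     filterlim \<Phi> at_top at_infinity"

definition orlicz_adm :: "'b measure \<Rightarrow> (real \<Rightarrow> real) \<Rightarrow> ('b \<Rightarrow> real) \<Rightarrow> real set" where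
  "orlicz_adm M \<Phi> \<zeta> = {k. k > 0 \<and> (\<integral>\<^sup>+ \<omega>. ennreal (\<Phi> (\<zeta> \<omega> / k)) \<partial>M) \<le> 1}"

definition orlicz_norm_finite :: "'b measure \<Rightarrow> (real \<Rightarrow> real) \<Rightarrow> ('b \<Rightarrow> real) \<Rightarrow> bool" where
  "orlicz_norm_finite M \<Phi> \<zeta> \<longleftrightarrow> orlicz_adm M \<Phi> \<zeta> \<noteq> {}"

definition orlicz_norm :: "'b measure \<Rightarrow> (real \<Rightarrow> real) \<Rightarrow> ('b \<Rightarrow> real) \<Rightarrow> real" where
  "orlicz_norm M \<Phi> \<zeta> = Inf (orlicz_adm M \<Phi> \<zeta>)"

definition modulus_cont :: "'a set \<Rightarrow> ('a \<Rightarrow> 'a \<Rightarrow> real) \<Rightarrow> ('a \<Rightarrow> real) \<Rightarrow> real \<Rightarrow> real" where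
  "modulus_cont X d f \<delta> =
     (SUP p \<in> {(x, y). x \<in> X \<and> y \<in> X \<and> d x y \<le> \<delta>}. \<bar>f (fst p) - f (snd p)\<bar>)"

definition mdiam :: "'a set \<Rightarrow> ('a \<Rightarrow> 'a \<Rightarrow> real) \<Rightarrow> real" where
  "mdiam X d = (SUP p \<in> X \<times> X. d (fst p) (snd p))"

text \<open>Separable random field (sequential form of Doob's separability).\<close>
definition separable_field ::
  "'b measure \<Rightarrow> 'a set \<Rightarrow> ('a \<Rightarrow> 'a \<Rightarrow> real) \<Rightarrow> ('a \<Rightarrow> 'b \<Rightarrow> real) \<Rightarrow> bool" where
  "separable_field M X d \<xi> \<longleftrightarrow>
     (\<exists>S N. S \<subseteq> X \<and> countable S \<and> N \<in> null_sets M \<and>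
        (\<forall>\<omega>\<in>space M - N. \<forall>x\<in>X. \<exists>s :: nat \<Rightarrow> 'a. range s \<subseteq> S \<and>
            limitin (Metric_space.mtopology X d) s x sequentially \<and>
            (\<lambda>n. \<xi> (s n) \<omega>) \<longlonglongrightarrow> \<xi> x \<omega>))"

end

theory Submission
  imports Defs
begin


context fixes \<Psi> :: "real \<Rightarrow> real" assumes orl: "orlicz_function \<Psi>" begin

lemma orl_nonneg: "\<Psi> u \<ge> 0" using orl by (simp add: orlicz_function_def)
lemma orl_zero: "\<Psi> 0 = 0" using orl by (simp add: orlicz_function_def)
lemma orl_cont: "continuous_on UNIV \<Psi>" using orl by (simp add: orlicz_function_def)
lemma orl_isCont: "isCont \<Psi> x" using orl_cont by (simp add: continuous_on_eq_continuous_at)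
lemma orl_meas[measurable]: "\<Psi> \<in> borel_measurable borel"
  using orl_cont by (rule borel_measurable_continuous_onI)
lemma orl_strict: "0 \<le> x \<Longrightarrow> x < y \<Longrightarrow> \<Psi> x < \<Psi> y"
  using orl unfolding orlicz_function_def strict_mono_on_def by auto
lemma orl_mono: "0 \<le> x \<Longrightarrow> x \<le> y \<Longrightarrow> \<Psi> x \<le> \<Psi> y"
  using orl_strict by (cases "x = y") (auto simp: le_less)
lemma orl_pos: "0 < x \<Longrightarrow> 0 < \<Psi> x"
  using orl_strict[of 0 x] orl_zero by simp
lemma orl_div: assumes "1 \<le> k" shows "\<Psi> (x / k) \<le> \<Psi> x / k"
proof -
  have cv: "convex_on UNIV \<Psi>" using orl by (simp add: orlicz_function_def)
  have "\<Psi> ((1 - 1/k) *\<^sub>R 0 + (1/k) *\<^sub>R x) \<le> (1 - 1/k) * \<Psi> 0 + (1/k) * \<Psi> x"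
    using assms by (intro convex_onD[OF cv]) auto
  thus ?thesis by (simp add: orl_zero)
qed
lemma orl_big: "\<exists>u>0. B < \<Psi> u"
proof -
  have "filterlim \<Psi> at_top at_infinity" using orl by (simp add: orlicz_function_def)
  then have "eventually (\<lambda>x. B + 1 \<le> \<Psi> x) at_infinity"
    by (simp add: filterlim_at_top)
  then obtain r where r: "\<And>x. r \<le> norm x \<Longrightarrow> B + 1 \<le> \<Psi> x"
    unfolding eventually_at_infinity by blast
  show ?thesis using r[of "max r 1"] by (intro exI[of _ "max r 1"]) auto
qed
end

lemma h_props:
  fixes \<theta> :: "nat \<Rightarrow> real" and h :: "real \<Rightarrow> real"
  assumes pos: "\<And>j. \<theta> j > 0"
  defines "t \<equiv> \<lambda>j \<delta>. (1/2::real)^j * min 1 (max 0 (\<delta> / \<theta> (Suc j)))"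
  assumes h_def: "h = (\<lambda>\<delta>. \<delta> + (\<Sum>j. t j \<delta>))"
  shows "continuous_on UNIV h" "\<And>x y. x < y \<Longrightarrow> h x < h y" "h 0 = 0"
    "\<And>x. 0 \<le> x \<Longrightarrow> 0 \<le> h x"
    "\<And>x n. \<theta> (Suc n) \<le> x \<Longrightarrow> (1/2)^n \<le> h x"
proof -
  have tb: "norm (t j x) \<le> (1/2)^j" for j x
    unfolding t_def by (auto simp: abs_mult intro!: mult_left_le)
  have t0: "0 \<le> t j x" for j x unfolding t_def by auto
  have sm: "summable (\<lambda>j. t j x)" for x
    by (rule summable_comparison_test[OF _ summable_geometric[of "1/2::real"]]) (use tb in auto)
  have tmono: "t j x \<le> t j y" if "x \<le> y" for j x y
    unfolding t_def using that pos[of "Suc j"]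
    by (intro mult_left_mono min.mono max.mono divide_right_mono) auto
  have "uniform_limit UNIV (\<lambda>n x. \<Sum>i<n. t i x) (\<lambda>x. suminf (\<lambda>i. t i x)) sequentially"
    by (rule Weierstrass_m_test[OF _ summable_geometric[of "1/2::real"]]) (use tb in auto)
  moreover have "\<forall>\<^sub>F n in sequentially. continuous_on UNIV (\<lambda>x. \<Sum>i<n. t i x)"
    unfolding t_def by (intro always_eventually allI continuous_intros) (use pos in \<open>auto simp: less_imp_neq[symmetric]\<close>)
  ultimately have "continuous_on UNIV (\<lambda>x. suminf (\<lambda>i. t i x))"
    by (intro uniform_limit_theorem) auto
  then show "continuous_on UNIV h" unfolding h_def by (intro continuous_intros)
  show "h x < h y" if "x < y" for x y
  proof -
    have "(\<Sum>j. t j x) \<le> (\<Sum>j. t j y)" using that by (intro suminf_le sm tmono) auto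
    thus ?thesis using that unfolding h_def by simp
  qed
  show "h 0 = 0" unfolding h_def t_def by simp
  show "0 \<le> h x" if "0 \<le> x" for x unfolding h_def using that t0 sm by (simp add: suminf_nonneg)
  show "(1/2)^n \<le> h x" if "\<theta> (Suc n) \<le> x" for x n
  proof -
    have "x \<ge> 0" using that pos[of "Suc n"] by linarith
    have e: "t n x = (1/2)^n" unfolding t_def using that pos[of "Suc n"] by auto
    have "(1/2)^n = sum (\<lambda>j. t j x) {n}" using e by simp
    also have "\<dots> \<le> (\<Sum>j. t j x)" by (rule sum_le_suminf[OF sm]) (auto simp: t0)
    finally show ?thesis unfolding h_def using \<open>x \<ge> 0\<close> by simp
  qed
qed


lemma unif_cont_abs:
  fixes f :: "'a \<Rightarrow> real"
  assumes ms: "Metric_space X d" and cpt: "compact_space (Metric_space.mtopology X d)"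
    and f: "continuous_map (Metric_space.mtopology X d) euclidean f" and e: "e > 0"
  shows "\<exists>\<tau>>0. \<forall>x\<in>X. \<forall>y\<in>X. d x y < \<tau> \<longrightarrow> \<bar>f x - f y\<bar> < e"
proof -
  interpret Metric_space X d by (rule ms)
  have "uniformly_continuous_map (metric (X,d)) euclidean_metric f"
    by (rule continuous_imp_uniformly_continuous_map) (use cpt f in simp)
  then obtain \<tau> where "\<tau> > 0" "\<forall>x\<in>X. \<forall>y\<in>X. d y x < \<tau> \<longrightarrow> dist (f y) (f x) < e"
    unfolding uniformly_continuous_map_def using e by auto
  then show ?thesis by (intro exI[of _ \<tau>]) (auto simp: dist_real_def)
qed

lemma bounded_abs:
  fixes f :: "'a \<Rightarrow> real"
  assumes ms: "Metric_space X d" and cpt: "compact_space (Metric_space.mtopology X d)"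
    and f: "continuous_map (Metric_space.mtopology X d) euclidean f"
  shows "\<exists>B. \<forall>x\<in>X. \<bar>f x\<bar> \<le> B"
proof -
  interpret Metric_space X d by (rule ms)
  have "compactin euclidean (f ` topspace mtopology)"
    using cpt f by (intro image_compactin) (auto simp: compact_space_def)
  then have "compact (f ` X)" by simp
  then have "bounded (f ` X)" by (rule compact_imp_bounded)
  then obtain B where "\<forall>y\<in>f ` X. norm y \<le> B" unfolding bounded_iff by blast
  then show ?thesis by auto
qed

lemma psi_sup:
  fixes \<Psi> :: "real \<Rightarrow> real" and a :: "nat \<Rightarrow> real"
  assumes orl: "orlicz_function \<Psi>" and a0: "\<And>j. 0 \<le> a j"
    and fin: "(\<Sum>j. ennreal (\<Psi> (a j))) \<noteq> \<top>"
  shows "bdd_above (range a)" "enn2real (SUP j. ennreal (a j)) = (SUP j. a j)"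
    "(SUP j. ennreal (a j)) \<noteq> \<top>"
    "ennreal (\<Psi> (enn2real (SUP j. ennreal (a j)))) \<le> (\<Sum>j. ennreal (\<Psi> (a j)))"
proof -
  obtain R where R: "(\<Sum>j. ennreal (\<Psi> (a j))) = ennreal R" "0 \<le> R"
    using fin by (metis ennreal_cases)
  have le: "\<Psi> (a j) \<le> R" for j
  proof -
    have "ennreal (\<Psi> (a j)) = sum (\<lambda>j. ennreal (\<Psi> (a j))) {j}" by simp
    also have "\<dots> \<le> (\<Sum>j. ennreal (\<Psi> (a j)))"
      by (rule sum_le_suminf) (auto intro: summableI)
    finally show ?thesis using R by (auto simp: ennreal_le_iff2 ennreal_le_iff)
  qed
  obtain u where u: "u > 0" "R < \<Psi> u" using orl_big[OF orl] by blast
  have au: "a j \<le> u" for j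
  proof (rule ccontr)
    assume "\<not> a j \<le> u"
    then have "\<Psi> u < \<Psi> (a j)" using orl_strict[OF orl, of u "a j"] u by auto
    then show False using le[of j] u by simp
  qed
  show bdd: "bdd_above (range a)" using au by (auto intro!: bdd_aboveI[of _ u])
  have "(SUP j. ennreal (a j)) \<le> ennreal u" using au by (auto intro!: SUP_least ennreal_leI)
  then show fin2: "(SUP j. ennreal (a j)) \<noteq> \<top>" by (metis ennreal_neq_top neq_top_trans)
  have eq: "ennreal (SUP j. a j) = (SUP j. ennreal (a j))"
    by (rule ennreal_SUP[OF fin2]) auto
  have sup0: "0 \<le> (SUP j. a j)" using a0[of 0] bdd by (meson cSUP_upper order_trans rangeI UNIV_I)
  show e2: "enn2real (SUP j. ennreal (a j)) = (SUP j. a j)" using eq[symmetric] sup0 by simp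
  have "Sup (range a) \<in> closure (range a)" by (rule closure_contains_Sup) (use bdd in auto)
  moreover have "closure (range a) \<subseteq> {y. \<Psi> y \<le> R}"
    by (rule closure_minimal) (use le in \<open>auto intro!: closed_Collect_le orl_cont[OF orl] continuous_intros\<close>)
  ultimately have "\<Psi> (SUP j. a j) \<le> R" by auto
  then show "ennreal (\<Psi> (enn2real (SUP j. ennreal (a j)))) \<le> (\<Sum>j. ennreal (\<Psi> (a j)))"
    using e2 R by (simp add: ennreal_le_iff)
qed

lemma adm_scale:
  assumes "c > 0"
  shows "orlicz_adm M \<Psi> (\<lambda>\<omega>. \<zeta> \<omega> / c) = (\<lambda>k. k / c) ` orlicz_adm M \<Psi> \<zeta>"
proof (intro set_eqI iffI)
  fix k assume "k \<in> orlicz_adm M \<Psi> (\<lambda>\<omega>. \<zeta> \<omega> / c)"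
  then have "c * k \<in> orlicz_adm M \<Psi> \<zeta>" using assms
    by (auto simp: orlicz_adm_def mult.commute)
  then show "k \<in> (\<lambda>k. k / c) ` orlicz_adm M \<Psi> \<zeta>" using assms by (auto intro!: image_eqI[of _ _ "c*k"])
next
  fix k assume "k \<in> (\<lambda>k. k / c) ` orlicz_adm M \<Psi> \<zeta>"
  then obtain k' where "k' \<in> orlicz_adm M \<Psi> \<zeta>" "k = k'/c" by auto
  then show "k \<in> orlicz_adm M \<Psi> (\<lambda>\<omega>. \<zeta> \<omega> / c)" using assms
    by (auto simp: orlicz_adm_def)
qed

lemma Inf_scale:
  fixes A :: "real set"
  assumes "A \<noteq> {}" "\<And>k. k \<in> A \<Longrightarrow> 0 < k" "c > 0"
  shows "Inf ((\<lambda>k. k / c) ` A) = Inf A / c"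
proof -
  have bA: "bdd_below A" using assms(2) by (meson bdd_belowI less_imp_le)
  have bI: "bdd_below ((\<lambda>k. k / c) ` A)" using assms(2,3) by (auto intro!: bdd_belowI[of _ 0] less_imp_le)
  show ?thesis
  proof (rule antisym)
    have "c * Inf ((\<lambda>k. k / c) ` A) \<le> Inf A"
    proof (rule cInf_greatest[OF assms(1)])
      fix k assume "k \<in> A"
      then have "Inf ((\<lambda>k. k / c) ` A) \<le> k / c" by (intro cInf_lower bI) auto
      then show "c * Inf ((\<lambda>k. k / c) ` A) \<le> k" using assms(3) by (simp add: field_simps)
    qed
    then show "Inf ((\<lambda>k. k / c) ` A) \<le> Inf A / c" using assms(3) by (simp add: field_simps)
  next
    show "Inf A / c \<le> Inf ((\<lambda>k. k / c) ` A)"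
      using assms(1,3) by (auto intro!: cInf_greatest divide_right_mono cInf_lower bA)
  qed
qed


theorem theorem4p1:
  fixes X :: "'a set" and d :: "'a \<Rightarrow> 'a \<Rightarrow> real"
    and M :: "'b measure" and \<xi> :: "'a \<Rightarrow> 'b \<Rightarrow> real"
    and \<Phi> \<Psi> :: "real \<Rightarrow> real"
  assumes "Metric_space X d"
    and "compact_space (Metric_space.mtopology X d)"
    and "X \<noteq> {}"
    and "prob_space M"
    and "\<And>x. x \<in> X \<Longrightarrow> \<xi> x \<in> borel_measurable M"
    and "separable_field M X d \<xi>"
    and "AE \<omega> in M. continuous_map (Metric_space.mtopology X d) euclidean (\<lambda>x. \<xi> x \<omega>)"
    and "orlicz_function \<Phi>"
    and "orlicz_norm_finite M \<Phi> (\<lambda>\<omega>. SUP x\<in>X. \<bar>\<xi> x \<omega>\<bar>)"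
    and "orlicz_function \<Psi>"
    and "\<And>v. v > 0 \<Longrightarrow> ((\<lambda>u. \<Psi> (u * v) / \<Phi> u) \<longlongrightarrow> 0) at_top"
  shows "\<exists>\<zeta> h. \<zeta> \<in> borel_measurable M \<and> (\<forall>\<omega>\<in>space M. \<zeta> \<omega> \<ge> 0) \<and>
           orlicz_norm_finite M \<Psi> \<zeta> \<and> orlicz_norm M \<Psi> \<zeta> = 1 \<and>
           continuous_on {0..mdiam X d} h \<and> strict_mono_on {0..mdiam X d} h \<and>
           (\<forall>\<delta>\<in>{0..mdiam X d}. h \<delta> \<ge> 0) \<and> h 0 = 0 \<and>
           (h \<longlongrightarrow> 0) (at_right 0) \<and>
           (AE \<omega> in M. \<forall>\<delta>\<in>{0..mdiam X d}.
               modulus_cont X d (\<lambda>x. \<xi> x \<omega>) \<delta> \<le> \<zeta> \<omega> * h \<delta>)"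
proof -
  interpret ms: Metric_space X d by fact
  interpret P: prob_space M by fact
  note orlF = assms(8) and orlP = assms(10)
  note [measurable] = orl_meas[OF orlF] orl_meas[OF orlP]
  obtain N1 where N1: "N1 \<in> null_sets M"
    "{\<omega>\<in>space M. \<not> continuous_map ms.mtopology euclidean (\<lambda>x. \<xi> x \<omega>)} \<subseteq> N1"
    using assms(7) unfolding eventually_ae_filter by blast
  have N1s: "N1 \<in> sets M" using N1 by auto
  define G where "G = space M - N1"
  have Gs: "G \<in> sets M" using N1s by (auto simp: G_def)
  define \<xi>' where "\<xi>' x \<omega> = (if \<omega> \<in> G then \<xi> x \<omega> else 0)" for x \<omega>
  have cont': "continuous_map ms.mtopology euclidean (\<lambda>x. \<xi>' x \<omega>)" for \<omega>
  proof (cases "\<omega> \<in> G")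
    case True
    then show ?thesis using N1(2) by (auto simp: \<xi>'_def G_def)
  next
    case False
    then show ?thesis by (simp add: \<xi>'_def)
  qed
  have \<xi>'_meas: "(\<lambda>\<omega>. \<xi>' x \<omega>) \<in> borel_measurable M" if "x \<in> X" for x
    unfolding \<xi>'_def using that Gs by (intro measurable_If_set assms(5) borel_measurable_const) auto
  obtain S N where S: "S \<subseteq> X" "countable S" "N \<in> null_sets M"
    and Sp: "\<forall>\<omega>\<in>space M - N. \<forall>x\<in>X. \<exists>s :: nat \<Rightarrow> 'a. range s \<subseteq> S \<and>
            limitin ms.mtopology s x sequentially \<and> (\<lambda>n. \<xi> (s n) \<omega>) \<longlonglongrightarrow> \<xi> x \<omega>"
    using assms(6) unfolding separable_field_def
    apply (elim exE conjE) apply (rule that) apply assumption+ done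
  have "space M - N \<noteq> {}"
  proof
    assume "space M - N = {}" then have "space M \<subseteq> N" by auto
    then have "emeasure M (space M) \<le> emeasure M N" using S(3) by (intro emeasure_mono) auto
    then show False using S(3) P.emeasure_space_1 by auto
  qed
  then obtain \<omega>0 where \<omega>0: "\<omega>0 \<in> space M - N" by blast
  have dens: "\<exists>s\<in>S. d s x < \<tau>" if xX: "x \<in> X" and tp: "\<tau> > 0" for x \<tau>
  proof -
    obtain s :: "nat \<Rightarrow> 'a" where s: "range s \<subseteq> S" "limitin ms.mtopology s x sequentially"
      using Sp \<omega>0 xX by meson
    then have "eventually (\<lambda>n. s n \<in> X \<and> d (s n) x < \<tau>) sequentially"
      using tp by (simp add: ms.limitin_metric)
    then obtain n where "d (s n) x < \<tau>" by (auto simp: eventually_sequentially)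
    then show ?thesis using s(1) by auto
  qed
  obtain x0 where x0: "x0 \<in> X" using assms(3) by blast
  obtain s0 where s0: "s0 \<in> S" using dens[OF x0, of 1] by auto
  have s0X: "s0 \<in> X" using s0 S(1) by auto
  have bnd: "\<exists>B. \<forall>x\<in>X. \<bar>\<xi>' x \<omega>\<bar> \<le> B" for \<omega>
    by (rule bounded_abs[OF assms(1,2) cont'])
  define \<eta> where "\<eta> \<omega> = (SUP s\<in>S. \<bar>\<xi>' s \<omega>\<bar>)" for \<omega>
  define I where "I r = {p\<in>S\<times>S. d (fst p) (snd p) < r}" for r
  define W where "W r \<omega> = (SUP p\<in>I r. \<bar>\<xi>' (fst p) \<omega> - \<xi>' (snd p) \<omega>\<bar>)" for r \<omega>
  have bddS: "bdd_above ((\<lambda>s. \<bar>\<xi>' s \<omega>\<bar>) ` S)" for \<omega>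
  proof -
    obtain B where "\<forall>x\<in>X. \<bar>\<xi>' x \<omega>\<bar> \<le> B" using bnd by blast
    then show ?thesis using S(1) by (intro bdd_aboveI[of _ B]) auto
  qed
  have \<eta>_ge: "\<bar>\<xi>' s \<omega>\<bar> \<le> \<eta> \<omega>" if "s \<in> S" for s \<omega>
    unfolding \<eta>_def using that bddS by (rule cSUP_upper)
  have \<eta>_nn: "0 \<le> \<eta> \<omega>" for \<omega> using \<eta>_ge[OF s0, of \<omega>] by linarith
  have Ine: "I r \<noteq> {}" if "r > 0" for r
    using that s0 s0X by (auto simp: I_def intro!: exI[of _ s0])
  have bddW: "bdd_above ((\<lambda>p. \<bar>\<xi>' (fst p) \<omega> - \<xi>' (snd p) \<omega>\<bar>) ` I r)" for r \<omega>
  proof (intro bdd_aboveI[of _ "2 * \<eta> \<omega>"])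
    fix y assume "y \<in> (\<lambda>p. \<bar>\<xi>' (fst p) \<omega> - \<xi>' (snd p) \<omega>\<bar>) ` I r"
    then obtain s t where st: "s \<in> S" "t \<in> S" "y = \<bar>\<xi>' s \<omega> - \<xi>' t \<omega>\<bar>" by (auto simp: I_def)
    show "y \<le> 2 * \<eta> \<omega>" using \<eta>_ge[OF st(1), of \<omega>] \<eta>_ge[OF st(2), of \<omega>] st(3) by linarith
  qed
  have W_ge: "\<bar>\<xi>' s \<omega> - \<xi>' t \<omega>\<bar> \<le> W r \<omega>" if "(s, t) \<in> I r" for s t r \<omega>
    unfolding W_def using cSUP_upper[OF that bddW[of \<omega> r]] by simp
  have W_le: "W r \<omega> \<le> 2 * \<eta> \<omega>" if "r > 0" for r \<omega>
    unfolding W_def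
  proof (rule cSUP_least[OF Ine[OF that]])
    fix p assume "p \<in> I r"
    then have "fst p \<in> S" "snd p \<in> S" by (auto simp: I_def)
    then show "\<bar>\<xi>' (fst p) \<omega> - \<xi>' (snd p) \<omega>\<bar> \<le> 2 * \<eta> \<omega>"
      using \<eta>_ge[of "fst p" \<omega>] \<eta>_ge[of "snd p" \<omega>] by linarith
  qed
  have W_nn: "0 \<le> W r \<omega>" if "r > 0" for r \<omega>
  proof -
    have "(s0, s0) \<in> I r" using that s0 s0X by (auto simp: I_def)
    from W_ge[OF this, of \<omega>] show ?thesis by simp
  qed
  have \<eta>_meas[measurable]: "\<eta> \<in> borel_measurable M"
    unfolding \<eta>_def
    by (rule borel_measurable_cSUP[OF S(2)]) (use S(1) \<xi>'_meas bddS in auto)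
  have W_meas[measurable]: "W r \<in> borel_measurable M" for r
    unfolding W_def
  proof (rule borel_measurable_cSUP)
    show "countable (I r)"
      by (rule countable_subset[of _ "S \<times> S"]) (use S(2) in \<open>auto simp: I_def\<close>)
    show "(\<lambda>x. \<bar>\<xi>' (fst i) x - \<xi>' (snd i) x\<bar>) \<in> borel_measurable M" if iI: "i \<in> I r" for i
    proof -
      obtain x y where xy: "i = (x,y)" "x \<in> X" "y \<in> X" using iI S(1) by (auto simp: I_def)
      note [measurable] = \<xi>'_meas[OF xy(2)] \<xi>'_meas[OF xy(3)]
      have "(\<lambda>\<omega>. \<bar>\<xi>' x \<omega> - \<xi>' y \<omega>\<bar>) \<in> borel_measurable M" by measurable
      then show ?thesis using xy(1) by simp
    qed
  qed (rule bddW)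
  have W_small: "\<exists>\<tau>>0. \<forall>\<rho>. 0 < \<rho> \<and> \<rho> \<le> \<tau> \<longrightarrow> W \<rho> \<omega> \<le> e" if epos: "e > 0" for \<omega> e
  proof -
    obtain \<tau> where \<tau>: "\<tau> > 0" "\<forall>x\<in>X. \<forall>y\<in>X. d x y < \<tau> \<longrightarrow> \<bar>\<xi>' x \<omega> - \<xi>' y \<omega>\<bar> < e"
      using unif_cont_abs[OF assms(1,2) cont' epos] by blast
    show ?thesis
    proof (intro exI[of _ \<tau>] conjI allI impI)
      fix \<rho> assume \<rho>: "0 < \<rho> \<and> \<rho> \<le> \<tau>"
      show "W \<rho> \<omega> \<le> e" unfolding W_def
      proof (rule cSUP_least[OF Ine])
        fix p assume "p \<in> I \<rho>"
        then show "\<bar>\<xi>' (fst p) \<omega> - \<xi>' (snd p) \<omega>\<bar> \<le> e"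
          using \<tau>(2) \<rho> S(1) by (force simp: I_def)
      qed (use \<rho> in auto)
    qed (use \<tau> in auto)
  qed
  have Mod: "modulus_cont X d (\<lambda>x. \<xi> x \<omega>) \<delta> \<le> W r \<omega>"
    if \<omega>: "\<omega> \<in> G" and \<delta>: "0 \<le> \<delta>" "\<delta> < r" for \<omega> \<delta> r
  proof -
    have fe: "(\<lambda>x. \<xi> x \<omega>) = (\<lambda>x. \<xi>' x \<omega>)" using \<omega> by (simp add: \<xi>'_def)
    show ?thesis unfolding modulus_cont_def fe
    proof (rule cSUP_least)
      show "{(x, y). x \<in> X \<and> y \<in> X \<and> d x y \<le> \<delta>} \<noteq> {}" using x0 \<delta> by (auto intro!: exI[of _ x0])
    next
      fix p assume "p \<in> {(x, y). x \<in> X \<and> y \<in> X \<and> d x y \<le> \<delta>}"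
      then obtain x y where p: "p = (x, y)" "x \<in> X" "y \<in> X" "d x y \<le> \<delta>" by auto
      show "\<bar>\<xi>' (fst p) \<omega> - \<xi>' (snd p) \<omega>\<bar> \<le> W r \<omega>"
      proof (rule field_le_epsilon)
        fix e :: real assume e: "0 < e"
        obtain \<tau> where \<tau>: "\<tau> > 0" "\<forall>x\<in>X. \<forall>y\<in>X. d x y < \<tau> \<longrightarrow> \<bar>\<xi>' x \<omega> - \<xi>' y \<omega>\<bar> < e/2"
          using unif_cont_abs[OF assms(1,2) cont', of "e/2" \<omega>] e by auto
        define \<tau>' where "\<tau>' = min \<tau> ((r - \<delta>)/2)"
        have \<tau>': "\<tau>' > 0" using \<tau> \<delta> by (simp add: \<tau>'_def)
        obtain s where s: "s \<in> S" "d s x < \<tau>'" using dens[OF p(2) \<tau>'] by blast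
        obtain t where t: "t \<in> S" "d t y < \<tau>'" using dens[OF p(3) \<tau>'] by blast
        have sX: "s \<in> X" and tX: "t \<in> X" using s t S(1) by auto
        have "d s t \<le> d s x + d x t" using ms.triangle sX p(2) tX by blast
        moreover have "d x t \<le> d x y + d t y" using ms.triangle[OF p(2,3) tX] ms.commute[of y t] by simp
        moreover have "d s x < (r-\<delta>)/2" "d t y < (r-\<delta>)/2" using s t by (auto simp: \<tau>'_def)
        ultimately have "d s t < r" using p(4) by simp
        then have "(s, t) \<in> I r" using s t by (simp add: I_def)
        then have 1: "\<bar>\<xi>' s \<omega> - \<xi>' t \<omega>\<bar> \<le> W r \<omega>" by (rule W_ge)
        have "d x s = d s x" by (rule ms.commute)
        then have 2: "\<bar>\<xi>' x \<omega> - \<xi>' s \<omega>\<bar> < e/2" using \<tau>(2) p(2) sX s(2) unfolding \<tau>'_def by auto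
        have 3: "\<bar>\<xi>' t \<omega> - \<xi>' y \<omega>\<bar> < e/2" using \<tau>(2) p(3) tX t(2) unfolding \<tau>'_def by auto
        show "\<bar>\<xi>' (fst p) \<omega> - \<xi>' (snd p) \<omega>\<bar> \<le> W r \<omega> + e"
        proof -
          have "\<bar>\<xi>' x \<omega> - \<xi>' y \<omega>\<bar> \<le> W r \<omega> + e" using 1 2 3 by linarith
          then show ?thesis using p(1) by simp
        qed
      qed
    qed
  qed
  obtain k where k: "k > 0" "(\<integral>\<^sup>+\<omega>. ennreal (\<Phi> ((SUP x\<in>X. \<bar>\<xi> x \<omega>\<bar>) / k)) \<partial>M) \<le> 1"
    using assms(9) unfolding orlicz_norm_finite_def orlicz_adm_def by auto
  have \<eta>_le0: "\<eta> \<omega> \<le> (SUP x\<in>X. \<bar>\<xi> x \<omega>\<bar>)" if "\<omega> \<in> G" for \<omega>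
  proof -
    have fe: "\<xi> x \<omega> = \<xi>' x \<omega>" for x using that by (simp add: \<xi>'_def)
    show ?thesis unfolding \<eta>_def fe
    proof (rule cSUP_subset_mono)
      obtain B where "\<forall>x\<in>X. \<bar>\<xi>' x \<omega>\<bar> \<le> B" using bnd by blast
      then show "bdd_above ((\<lambda>x. \<bar>\<xi>' x \<omega>\<bar>) ` X)" by (intro bdd_aboveI[of _ B]) auto
    qed (use s0 S(1) in auto)
  qed
  have intPhi: "(\<integral>\<^sup>+\<omega>. ennreal (\<Phi> (\<eta> \<omega> / k)) \<partial>M) \<le> 1"
  proof -
    have "(\<integral>\<^sup>+\<omega>. ennreal (\<Phi> (\<eta> \<omega> / k)) \<partial>M) \<le> (\<integral>\<^sup>+\<omega>. ennreal (\<Phi> ((SUP x\<in>X. \<bar>\<xi> x \<omega>\<bar>) / k)) \<partial>M)"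
    proof (rule nn_integral_mono_AE)
      show "AE \<omega> in M. ennreal (\<Phi> (\<eta> \<omega> / k)) \<le> ennreal (\<Phi> ((SUP x\<in>X. \<bar>\<xi> x \<omega>\<bar>) / k))"
        using AE_not_in[OF N1(1)] AE_space
      proof eventually_elim
        case (elim \<omega>)
        then have "\<omega> \<in> G" by (simp add: G_def)
        then show ?case using \<eta>_le0 \<eta>_nn k(1)
          by (intro ennreal_leI orl_mono[OF orlF] divide_right_mono divide_nonneg_pos) auto
      qed
    qed
    then show ?thesis using k(2) by simp
  qed
  have F: "(\<integral>\<^sup>+\<omega>. ennreal (\<Psi> (c * \<eta> \<omega>)) \<partial>M) < \<infinity>" if cpos: "c > 0" for c
  proof -
    have "((\<lambda>u. \<Psi> (u * (c*k)) / \<Phi> u) \<longlongrightarrow> 0) at_top" using assms(11) cpos k(1) by simp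
    then have "eventually (\<lambda>u. \<Psi> (u * (c*k)) / \<Phi> u < 1) at_top" by (rule order_tendstoD) simp
    then obtain U where U: "\<And>u. u \<ge> U \<Longrightarrow> \<Psi> (u * (c*k)) / \<Phi> u < 1"
      by (auto simp: eventually_at_top_linorder)
    define U' where "U' = max U 1"
    have ptw: "ennreal (\<Psi> (c * \<eta> \<omega>)) \<le> ennreal (\<Phi> (\<eta> \<omega> / k)) + ennreal (\<Psi> (U' * (c*k)))" for \<omega>
    proof -
      have eq: "\<eta> \<omega> / k * (c*k) = c * \<eta> \<omega>" using k(1) by simp
      have "\<Psi> (c * \<eta> \<omega>) \<le> \<Phi> (\<eta> \<omega> / k) + \<Psi> (U' * (c*k))"
      proof (cases "U' \<le> \<eta> \<omega> / k")
        case True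
        then have pos: "\<Phi> (\<eta> \<omega> / k) > 0" by (intro orl_pos[OF orlF]) (auto simp: U'_def)
        have "\<Psi> (\<eta> \<omega> / k * (c*k)) / \<Phi> (\<eta> \<omega> / k) < 1" using True by (intro U) (auto simp: U'_def)
        then have "\<Psi> (\<eta> \<omega> / k * (c*k)) < \<Phi> (\<eta> \<omega> / k)" using pos by (simp add: divide_less_eq)
        then show ?thesis using eq orl_nonneg[OF orlP, of "U' * (c*k)"] by simp
      next
        case False
        have "\<Psi> (\<eta> \<omega> / k * (c*k)) \<le> \<Psi> (U' * (c*k))"
          using False \<eta>_nn[of \<omega>] k(1) cpos
          by (intro orl_mono[OF orlP] mult_right_mono) auto
        then show ?thesis using eq orl_nonneg[OF orlF, of "\<eta> \<omega> / k"] by simp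
      qed
      then have "ennreal (\<Psi> (c * \<eta> \<omega>)) \<le> ennreal (\<Phi> (\<eta> \<omega> / k) + \<Psi> (U' * (c*k)))"
        by (rule ennreal_leI)
      then show ?thesis using orl_nonneg[OF orlF, of "\<eta> \<omega> / k"] orl_nonneg[OF orlP, of "U' * (c*k)"]
        by (simp add: ennreal_plus)
    qed
    have "(\<integral>\<^sup>+\<omega>. ennreal (\<Psi> (c * \<eta> \<omega>)) \<partial>M) \<le>
          (\<integral>\<^sup>+\<omega>. ennreal (\<Phi> (\<eta> \<omega> / k)) + ennreal (\<Psi> (U' * (c*k))) \<partial>M)"
      by (rule nn_integral_mono) (rule ptw)
    also have "\<dots> = (\<integral>\<^sup>+\<omega>. ennreal (\<Phi> (\<eta> \<omega> / k)) \<partial>M) + ennreal (\<Psi> (U' * (c*k)))"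
      by (subst nn_integral_add) (auto simp: P.emeasure_space_1)
    also have "\<dots> < \<infinity>"
    proof -
      have "(\<integral>\<^sup>+\<omega>. ennreal (\<Phi> (\<eta> \<omega> / k)) \<partial>M) \<noteq> \<top>"
        using intPhi by (metis ennreal_one_neq_top neq_top_trans)
      then show ?thesis by (simp add: less_top[symmetric])
    qed
    finally show ?thesis .
  qed
  have L: "(\<lambda>m. \<integral>\<^sup>+\<omega>. ennreal (\<Psi> (c * W (1 / real (Suc m)) \<omega>)) \<partial>M) \<longlonglongrightarrow> 0"
    if cpos: "c > 0" for c
  proof -
    have "(\<lambda>m. \<integral>\<^sup>+\<omega>. ennreal (\<Psi> (c * W (1 / real (Suc m)) \<omega>)) \<partial>M) \<longlonglongrightarrow> (\<integral>\<^sup>+\<omega>. 0 \<partial>M)"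
    proof (rule nn_integral_dominated_convergence[where w="\<lambda>\<omega>. ennreal (\<Psi> ((2*c) * \<eta> \<omega>))"])
      show "AE \<omega> in M. ennreal (\<Psi> (c * W (1 / real (Suc j)) \<omega>)) \<le> ennreal (\<Psi> ((2*c) * \<eta> \<omega>))" for j
      proof (intro AE_I2 ennreal_leI orl_mono[OF orlP])
        fix \<omega>
        have w0: "0 \<le> W (1 / real (Suc j)) \<omega>" by (rule W_nn) simp
        have w2: "W (1 / real (Suc j)) \<omega> \<le> 2 * \<eta> \<omega>" by (rule W_le) simp
        show "0 \<le> c * W (1 / real (Suc j)) \<omega>" using w0 cpos by simp
        show "c * W (1 / real (Suc j)) \<omega> \<le> 2 * c * \<eta> \<omega>"
          using mult_left_mono[OF w2, of c] cpos by (simp add: mult_ac)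
      qed
      show "(\<integral>\<^sup>+\<omega>. ennreal (\<Psi> ((2*c) * \<eta> \<omega>)) \<partial>M) < \<infinity>" using F[of "2*c"] cpos by simp
      show "AE \<omega> in M. (\<lambda>i. ennreal (\<Psi> (c * W (1 / real (Suc i)) \<omega>))) \<longlonglongrightarrow> 0"
      proof (intro AE_I2)
        fix \<omega>
        have "(\<lambda>i. W (1 / real (Suc i)) \<omega>) \<longlonglongrightarrow> 0"
        proof (rule LIMSEQ_I)
          fix r :: real assume r: "0 < r"
          obtain \<tau> where \<tau>: "\<tau> > 0" "\<And>\<rho>. 0 < \<rho> \<and> \<rho> \<le> \<tau> \<Longrightarrow> W \<rho> \<omega> \<le> r/2"
            using W_small[of "r/2" \<omega>] r by auto
          obtain n0 where n0: "1 / real (Suc n0) < \<tau>" using nat_approx_posE[OF \<tau>(1)] by blast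
          show "\<exists>no. \<forall>n\<ge>no. norm (W (1 / real (Suc n)) \<omega> - 0) < r"
          proof (intro exI allI impI)
            fix n assume "n0 \<le> n"
            then have "1 / real (Suc n) \<le> 1 / real (Suc n0)" by (simp add: frac_le)
            then have "W (1 / real (Suc n)) \<omega> \<le> r/2" using n0 by (intro \<tau>(2)) auto
            moreover have "0 \<le> W (1 / real (Suc n)) \<omega>" by (rule W_nn) simp
            ultimately show "norm (W (1 / real (Suc n)) \<omega> - 0) < r" using r by simp
          qed
        qed
        then have "(\<lambda>i. \<Psi> (c * W (1 / real (Suc i)) \<omega>)) \<longlonglongrightarrow> \<Psi> (c * 0)"
          by (intro isCont_tendsto_compose[OF orl_isCont[OF orlP]] tendsto_mult tendsto_const)
        then have "(\<lambda>i. ennreal (\<Psi> (c * W (1 / real (Suc i)) \<omega>))) \<longlonglongrightarrow> ennreal (\<Psi> (c * 0))"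
          by (rule tendsto_ennrealI)
        then show "(\<lambda>i. ennreal (\<Psi> (c * W (1 / real (Suc i)) \<omega>))) \<longlonglongrightarrow> 0"
          by (simp add: orl_zero[OF orlP])
      qed
    qed auto
    then show ?thesis by simp
  qed
  have "\<forall>j. \<exists>m0. \<forall>m\<ge>m0. (\<integral>\<^sup>+\<omega>. ennreal (\<Psi> (2^j * W (1 / real (Suc m)) \<omega>)) \<partial>M) < ennreal ((1/2)^j)"
  proof
    fix j :: nat
    have "eventually (\<lambda>m. (\<integral>\<^sup>+\<omega>. ennreal (\<Psi> (2^j * W (1 / real (Suc m)) \<omega>)) \<partial>M) < ennreal ((1/2)^j)) sequentially"
      using L[of "2^j"] by (rule order_tendstoD) simp_all
    then show "\<exists>m0. \<forall>m\<ge>m0. (\<integral>\<^sup>+\<omega>. ennreal (\<Psi> (2^j * W (1 / real (Suc m)) \<omega>)) \<partial>M) < ennreal ((1/2)^j)"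
      by (simp add: eventually_sequentially)
  qed
  then obtain Mf where Mf: "\<And>j m. Mf j \<le> m \<Longrightarrow> (\<integral>\<^sup>+\<omega>. ennreal (\<Psi> (2^j * W (1 / real (Suc m)) \<omega>)) \<partial>M) < ennreal ((1/2)^j)"
    by metis
  define D where "D = mdiam X d"
  define \<theta> where "\<theta> j = (if j = 0 then max D 0 + 1 else 1 / real (Suc (Mf j + j)))" for j
  have \<theta>_pos: "\<theta> j > 0" for j by (simp add: \<theta>_def max_def)
  have \<theta>_small: "\<theta> j \<le> 1 / real (Suc j)" if "j \<ge> 1" for j
    using that by (simp add: \<theta>_def frac_le)
  have \<theta>0: "\<theta> 0 > D" by (simp add: \<theta>_def max_def)
  define c where "c j \<omega> = (2::real)^j * W (\<theta> j) \<omega>" for j \<omega>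
  have c_nn: "0 \<le> c j \<omega>" for j \<omega> unfolding c_def using W_nn[OF \<theta>_pos] by simp
  have c_meas[measurable]: "c j \<in> borel_measurable M" for j unfolding c_def by measurable
  have int_c: "(\<integral>\<^sup>+\<omega>. ennreal (\<Psi> (c j \<omega>)) \<partial>M) \<le> ennreal ((1/2)^j)" if "j \<ge> 1" for j
  proof -
    have "\<theta> j = 1 / real (Suc (Mf j + j))" using that by (simp add: \<theta>_def)
    then show ?thesis unfolding c_def using Mf[of j "Mf j + j"] by (simp add: less_imp_le)
  qed
  have int_c0: "(\<integral>\<^sup>+\<omega>. ennreal (\<Psi> (c 0 \<omega>)) \<partial>M) < \<infinity>"
  proof -
    have "(\<integral>\<^sup>+\<omega>. ennreal (\<Psi> (c 0 \<omega>)) \<partial>M) \<le> (\<integral>\<^sup>+\<omega>. ennreal (\<Psi> (2 * \<eta> \<omega>)) \<partial>M)"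
      unfolding c_def using W_nn[OF \<theta>_pos] W_le[OF \<theta>_pos]
      by (intro nn_integral_mono ennreal_leI orl_mono[OF orlP]) auto
    also have "\<dots> < \<infinity>" using F[of 2] by simp
    finally show ?thesis .
  qed
  define Sg where "Sg \<omega> = (\<Sum>j. ennreal (\<Psi> (c j \<omega>)))" for \<omega>
  have Sg_meas[measurable]: "Sg \<in> borel_measurable M" unfolding Sg_def by measurable
  have int_Sg: "(\<integral>\<^sup>+\<omega>. Sg \<omega> \<partial>M) < \<infinity>"
  proof -
    define A0 where "A0 = (\<integral>\<^sup>+\<omega>. ennreal (\<Psi> (c 0 \<omega>)) \<partial>M)"
    have "(\<integral>\<^sup>+\<omega>. Sg \<omega> \<partial>M) = (\<Sum>j. \<integral>\<^sup>+\<omega>. ennreal (\<Psi> (c j \<omega>)) \<partial>M)"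
      unfolding Sg_def by (rule nn_integral_suminf) measurable
    also have "\<dots> \<le> (\<Sum>j. (if j = 0 then A0 else 0) + ennreal ((1/2)^j))"
    proof (rule suminf_le)
      show "(\<integral>\<^sup>+\<omega>. ennreal (\<Psi> (c j \<omega>)) \<partial>M) \<le> (if j = 0 then A0 else 0) + ennreal ((1/2)^j)" for j
      proof (cases "j = 0")
        case True then show ?thesis by (simp add: A0_def)
      next
        case False then show ?thesis using int_c[of j] by simp
      qed
    qed (auto intro: summableI)
    also have "\<dots> = (\<Sum>j. (if j = 0 then A0 else 0)) + (\<Sum>j. ennreal ((1/2)^j))"
      by (rule suminf_add[symmetric]) (auto intro: summableI)
    also have "(\<Sum>j. (if j = 0 then A0 else 0)) = A0"
      using sums_single[of 0 "\<lambda>_. A0"] by (simp add: sums_iff)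
    also have "(\<Sum>j. ennreal ((1/2::real)^j)) = ennreal 2"
      by (subst suminf_ennreal2) (auto simp: suminf_geometric summable_geometric)
    also have "A0 + ennreal 2 < \<infinity>" using int_c0 by (simp add: A0_def less_top[symmetric])
    finally show ?thesis .
  qed
  have AE_Sg: "AE \<omega> in M. Sg \<omega> \<noteq> \<infinity>"
    by (rule nn_integral_noteq_infinite) (use int_Sg in auto)
  define \<zeta>1 where "\<zeta>1 \<omega> = enn2real (SUP j. ennreal (c j \<omega>))" for \<omega>
  define \<zeta>2 where "\<zeta>2 \<omega> = max 1 (\<zeta>1 \<omega>)" for \<omega>
  have \<zeta>2_meas[measurable]: "\<zeta>2 \<in> borel_measurable M" unfolding \<zeta>2_def \<zeta>1_def by measurable
  have \<zeta>1_nn: "0 \<le> \<zeta>1 \<omega>" for \<omega> by (simp add: \<zeta>1_def)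
  have \<zeta>2_ge: "1 \<le> \<zeta>2 \<omega>" for \<omega> by (simp add: \<zeta>2_def)
  have Psi\<zeta>1: "ennreal (\<Psi> (\<zeta>1 \<omega>)) \<le> Sg \<omega>" for \<omega>
  proof (cases "Sg \<omega> = \<top>")
    case True then show ?thesis by simp
  next
    case False
    then show ?thesis unfolding \<zeta>1_def Sg_def using psi_sup(4)[OF orlP c_nn] by (simp add: Sg_def)
  qed
  have int\<zeta>2: "(\<integral>\<^sup>+\<omega>. ennreal (\<Psi> (\<zeta>2 \<omega>)) \<partial>M) < \<infinity>"
  proof -
    have "ennreal (\<Psi> (\<zeta>2 \<omega>)) \<le> ennreal (\<Psi> 1) + Sg \<omega>" for \<omega>
    proof -
      have "\<Psi> (\<zeta>2 \<omega>) \<le> \<Psi> 1 + \<Psi> (\<zeta>1 \<omega>)"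
        using orl_nonneg[OF orlP, of 1] orl_nonneg[OF orlP, of "\<zeta>1 \<omega>"] by (simp add: \<zeta>2_def max_def)
      then have "ennreal (\<Psi> (\<zeta>2 \<omega>)) \<le> ennreal (\<Psi> 1) + ennreal (\<Psi> (\<zeta>1 \<omega>))"
        using orl_nonneg[OF orlP, of 1] orl_nonneg[OF orlP, of "\<zeta>1 \<omega>"]
        by (simp add: ennreal_plus[symmetric] ennreal_leI del: ennreal_plus)
      also have "\<dots> \<le> ennreal (\<Psi> 1) + Sg \<omega>" using Psi\<zeta>1 by (rule add_left_mono)
      finally show ?thesis .
    qed
    then have "(\<integral>\<^sup>+\<omega>. ennreal (\<Psi> (\<zeta>2 \<omega>)) \<partial>M) \<le> (\<integral>\<^sup>+\<omega>. ennreal (\<Psi> 1) + Sg \<omega> \<partial>M)"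
      by (intro nn_integral_mono) auto
    also have "\<dots> = ennreal (\<Psi> 1) + (\<integral>\<^sup>+\<omega>. Sg \<omega> \<partial>M)"
      by (subst nn_integral_add) (auto simp: P.emeasure_space_1)
    also have "\<dots> < \<infinity>" using int_Sg by (simp add: less_top[symmetric])
    finally show ?thesis .
  qed
  obtain C2 where C2: "(\<integral>\<^sup>+\<omega>. ennreal (\<Psi> (\<zeta>2 \<omega>)) \<partial>M) = ennreal C2" "0 \<le> C2"
  proof (cases "(\<integral>\<^sup>+\<omega>. ennreal (\<Psi> (\<zeta>2 \<omega>)) \<partial>M)" rule: ennreal_cases)
    case (real r) then show ?thesis using that by auto
  next
    case top then show ?thesis using int\<zeta>2 by simp
  qed
  define \<kappa> where "\<kappa> = max 1 C2"
  have \<kappa>1: "1 \<le> \<kappa>" by (simp add: \<kappa>_def)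
  have \<kappa>adm: "\<kappa> \<in> orlicz_adm M \<Psi> \<zeta>2"
  proof -
    have "(\<integral>\<^sup>+\<omega>. ennreal (\<Psi> (\<zeta>2 \<omega> / \<kappa>)) \<partial>M) \<le> (\<integral>\<^sup>+\<omega>. ennreal (1/\<kappa>) * ennreal (\<Psi> (\<zeta>2 \<omega>)) \<partial>M)"
    proof (rule nn_integral_mono)
      fix \<omega>
      have "\<Psi> (\<zeta>2 \<omega> / \<kappa>) \<le> (1/\<kappa>) * \<Psi> (\<zeta>2 \<omega>)" using orl_div[OF orlP \<kappa>1] by simp
      then show "ennreal (\<Psi> (\<zeta>2 \<omega> / \<kappa>)) \<le> ennreal (1/\<kappa>) * ennreal (\<Psi> (\<zeta>2 \<omega>))"
        using \<kappa>1 orl_nonneg[OF orlP] by (simp add: ennreal_mult[symmetric] ennreal_leI del: ennreal_mult)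
    qed
    also have "\<dots> = ennreal (1/\<kappa>) * ennreal C2" by (subst nn_integral_cmult) (auto simp: C2)
    also have "\<dots> = ennreal (C2 / \<kappa>)" using \<kappa>1 C2(2) by (simp add: ennreal_mult[symmetric])
    also have "\<dots> \<le> 1" using \<kappa>1 C2(2) by (simp add: \<kappa>_def)
    finally show ?thesis using \<kappa>1 by (simp add: orlicz_adm_def)
  qed
  define \<nu> where "\<nu> = orlicz_norm M \<Psi> \<zeta>2"
  have adm_pos: "k' > 0" if "k' \<in> orlicz_adm M \<Psi> \<zeta>2" for k' using that by (simp add: orlicz_adm_def)
  obtain u0 where u0: "u0 > 0" "1 < \<Psi> u0" using orl_big[OF orlP] by blast
  have adm_lb: "1 / u0 \<le> k'" if kA: "k' \<in> orlicz_adm M \<Psi> \<zeta>2" for k'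
  proof (rule ccontr)
    assume "\<not> 1 / u0 \<le> k'"
    then have kl: "k' < 1 / u0" by simp
    have kp: "k' > 0" using adm_pos[OF kA] .
    have "u0 < 1 / k'" using kl kp u0(1) by (simp add: field_simps)
    then have big: "1 < \<Psi> (1 / k')" using orl_strict[OF orlP, of u0 "1/k'"] u0 by simp
    have "ennreal (\<Psi> (1 / k')) = (\<integral>\<^sup>+\<omega>. ennreal (\<Psi> (1 / k')) \<partial>M)" by (simp add: P.emeasure_space_1)
    also have "\<dots> \<le> (\<integral>\<^sup>+\<omega>. ennreal (\<Psi> (\<zeta>2 \<omega> / k')) \<partial>M)"
      using \<zeta>2_ge kp by (intro nn_integral_mono ennreal_leI orl_mono[OF orlP] divide_right_mono) auto
    also have "\<dots> \<le> 1" using kA by (simp add: orlicz_adm_def)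
    finally have "\<Psi> (1 / k') \<le> 1" by (simp add: ennreal_le_iff2 ennreal_le_iff)
    then show False using big by simp
  qed
  have \<nu>_pos: "\<nu> > 0"
  proof -
    have "1 / u0 \<le> \<nu>" unfolding \<nu>_def orlicz_norm_def
      by (rule cInf_greatest) (use \<kappa>adm adm_lb in auto)
    moreover have "0 < 1 / u0" using u0(1) by simp
    ultimately show ?thesis by linarith
  qed
  obtain h where hdef: "h = (\<lambda>\<delta>. \<delta> + (\<Sum>j. (1/2::real)^j * min 1 (max 0 (\<delta> / \<theta> (Suc j)))))" by blast
  note hp = h_props[OF \<theta>_pos hdef]
  define \<zeta> where "\<zeta> \<omega> = \<zeta>2 \<omega> / \<nu>" for \<omega>
  define h' where "h' \<delta> = \<nu> * h \<delta>" for \<delta>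
  have adm_eq: "orlicz_adm M \<Psi> \<zeta> = (\<lambda>k. k / \<nu>) ` orlicz_adm M \<Psi> \<zeta>2"
    unfolding \<zeta>_def by (rule adm_scale[OF \<nu>_pos])
  have fin: "orlicz_norm_finite M \<Psi> \<zeta>" unfolding orlicz_norm_finite_def adm_eq using \<kappa>adm by auto
  have norm1: "orlicz_norm M \<Psi> \<zeta> = 1"
  proof -
    have "Inf ((\<lambda>k. k / \<nu>) ` orlicz_adm M \<Psi> \<zeta>2) = Inf (orlicz_adm M \<Psi> \<zeta>2) / \<nu>"
      by (rule Inf_scale) (use \<kappa>adm adm_pos \<nu>_pos in auto)
    also have "\<dots> = 1" using \<nu>_pos unfolding \<nu>_def orlicz_norm_def by simp
    finally show ?thesis unfolding orlicz_norm_def adm_eq .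
  qed
  have cU: "continuous_on UNIV h'" unfolding h'_def
    by (rule continuous_on_mult[OF continuous_on_const hp(1)])
  have hmono: "strict_mono_on {0..D} h'"
    by (rule strict_mono_onI) (use hp(2) \<nu>_pos in \<open>auto simp: h'_def\<close>)
  have hnn: "\<forall>\<delta>\<in>{0..D}. h' \<delta> \<ge> 0" using hp(4) \<nu>_pos by (auto simp: h'_def)
  have h0: "h' 0 = 0" using hp(3) by (simp add: h'_def)
  have hlim: "(h' \<longlongrightarrow> 0) (at_right 0)"
  proof -
    have "isCont h' 0" using cU by (simp add: continuous_on_eq_continuous_at)
    then have "(h' \<longlongrightarrow> h' 0) (at 0)" by (simp add: isCont_def)
    then have "(h' \<longlongrightarrow> h' 0) (at_right 0)" by (rule tendsto_mono[OF at_within_le_at])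
    then show ?thesis using h0 by simp
  qed
  have AEb: "AE \<omega> in M. \<forall>\<delta>\<in>{0..D}. modulus_cont X d (\<lambda>x. \<xi> x \<omega>) \<delta> \<le> \<zeta> \<omega> * h' \<delta>"
    using AE_not_in[OF N1(1)] AE_Sg AE_space
  proof eventually_elim
    case (elim \<omega>)
    then have \<omega>G: "\<omega> \<in> G" by (simp add: G_def)
    have finS: "(\<Sum>j. ennreal (\<Psi> (c j \<omega>))) \<noteq> \<top>" using elim by (simp add: Sg_def)
    have bddc: "bdd_above (range (\<lambda>j. c j \<omega>))" by (rule psi_sup(1)[OF orlP c_nn finS])
    have z1: "\<zeta>1 \<omega> = (SUP j. c j \<omega>)" unfolding \<zeta>1_def by (rule psi_sup(2)[OF orlP c_nn finS])
    have c_le: "c j \<omega> \<le> \<zeta>2 \<omega>" for j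
    proof -
      have "c j \<omega> \<le> \<zeta>1 \<omega>" unfolding z1 by (rule cSUP_upper[OF UNIV_I bddc])
      then show ?thesis by (simp add: \<zeta>2_def)
    qed
    have z2nn: "0 \<le> \<zeta>2 \<omega>" using \<zeta>2_ge[of \<omega>] by simp
    show ?case
    proof
      fix \<delta> assume \<delta>: "\<delta> \<in> {0..D}"
      have eq: "\<zeta> \<omega> * h' \<delta> = \<zeta>2 \<omega> * h \<delta>" using \<nu>_pos by (simp add: \<zeta>_def h'_def)
      show "modulus_cont X d (\<lambda>x. \<xi> x \<omega>) \<delta> \<le> \<zeta> \<omega> * h' \<delta>"
      proof (cases "\<delta> = 0")
        case True
        have "modulus_cont X d (\<lambda>x. \<xi> x \<omega>) 0 \<le> 0" unfolding modulus_cont_def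
        proof (rule cSUP_least)
          show "{(x, y). x \<in> X \<and> y \<in> X \<and> d x y \<le> 0} \<noteq> {}" using x0 by (auto intro!: exI[of _ x0])
        next
          fix p assume "p \<in> {(x, y). x \<in> X \<and> y \<in> X \<and> d x y \<le> 0}"
          then obtain x y where xy: "p = (x,y)" "x \<in> X" "y \<in> X" "d x y \<le> 0" by auto
          then have "d x y = 0" using ms.nonneg[of x y] by linarith
          then have "x = y" using xy(2,3) by simp
          then show "\<bar>\<xi> (fst p) \<omega> - \<xi> (snd p) \<omega>\<bar> \<le> 0" using xy(1) by simp
        qed
        then show ?thesis using True h0 by simp
      next
        case False
        then have \<delta>p: "\<delta> > 0" using \<delta> by simp
        have "\<exists>n. \<not> \<theta> n \<le> \<delta> \<and> \<theta> (Suc n) \<le> \<delta>"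
        proof (rule exists_least_lemma)
          show "\<not> \<theta> 0 \<le> \<delta>" using \<theta>0 \<delta> by simp
          obtain n where n: "1 / real (Suc n) < \<delta>" using nat_approx_posE[OF \<delta>p] by blast
          have "\<theta> (Suc n) \<le> 1 / real (Suc (Suc n))" by (rule \<theta>_small) simp
          also have "\<dots> \<le> 1 / real (Suc n)" by (simp add: frac_le)
          finally show "\<exists>n. \<theta> n \<le> \<delta>" using n by (intro exI[of _ "Suc n"]) simp
        qed
        then obtain n where n: "\<not> \<theta> n \<le> \<delta>" "\<theta> (Suc n) \<le> \<delta>" by blast
        have "modulus_cont X d (\<lambda>x. \<xi> x \<omega>) \<delta> \<le> W (\<theta> n) \<omega>"
          by (rule Mod[OF \<omega>G]) (use \<delta> n in auto)
        also have "W (\<theta> n) \<omega> = c n \<omega> * (1/2)^n" by (simp add: c_def power_one_over)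
        also have "\<dots> \<le> \<zeta>2 \<omega> * (1/2)^n" by (intro mult_right_mono c_le) simp
        also have "\<dots> \<le> \<zeta>2 \<omega> * h \<delta>" using hp(5)[OF n(2)] z2nn by (intro mult_left_mono) auto
        finally show ?thesis using eq by simp
      qed
    qed
  qed
  show ?thesis unfolding D_def[symmetric]
  proof (intro exI[of _ \<zeta>] exI[of _ h'] conjI)
    show "\<zeta> \<in> borel_measurable M" unfolding \<zeta>_def by measurable
    show "\<forall>\<omega>\<in>space M. 0 \<le> \<zeta> \<omega>"
    proof
      fix \<omega>
      have "0 \<le> \<zeta>2 \<omega>" using \<zeta>2_ge[of \<omega>] by simp
      then show "0 \<le> \<zeta> \<omega>" unfolding \<zeta>_def using \<nu>_pos by simp
    qed
    show "continuous_on {0..D} h'" by (rule continuous_on_subset[OF cU]) simp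
  qed (use fin norm1 hmono hnn h0 hlim AEb in auto)
qed
end
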